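(* Let $\Sigma$ be a complete unimodular fan and $f\in\mathrm{PL}(\Sigma)$. Then there are only finitely many $m\in M$ such that $\sum_{\sigma\in\Sigma_{f,m}}(-1)^{\dim\sigma}\neq0$, where $\Sigma_{f,m}=\{\sigma\in\Sigma\mid m(x)\le f(x)\text{ for all }x\in\sigma\}$.
   Context: $N$ is a free abelian group, $N_\mathbb{R}=N\otimes\mathbb{R}$, $M=\mathrm{Hom}(N,\mathbb{Z})$ viewed as integral linear functions on $N_\mathbb{R}$. A fan is complete if its support is $N_\mathbb{R}$; unimodular if it contains the origin and for each cone the primitive ray generators extend to a $\mathbb{Z}$-basis of $N$. $\mathrm{PL}(\Sigma)$ is the group of functions on $|\Sigma|$ agreeing on each cone with some element of $M$. *)

theory Defs
  imports "HOL-Analysis.Analysis"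
begin

text \<open>The lattice N is modelled as the integer points of real^'n (so N = Z^n, n = CARD('n)),
  N_R = real^'n.  M = Hom(N,Z) is identified with integer vectors m acting by x \<mapsto> m \<bullet> x.\<close>

definition lattice_pt :: "real^'n \<Rightarrow> bool" where
  "lattice_pt v \<longleftrightarrow> (\<forall>i. v $ i \<in> \<int>)"

definition lattice_basis :: "(real^'n) set \<Rightarrow> bool" where
  "lattice_basis B \<longleftrightarrow> finite B \<and> (\<forall>b\<in>B. lattice_pt b) \<and> independent B \<and>
     (\<forall>v. lattice_pt v \<longrightarrow> (\<exists>c. (\<forall>b\<in>B. c b \<in> \<int>) \<and> v = (\<Sum>b\<in>B. c b *\<^sub>R b)))"

definition cone_gen :: "(real^'n) set \<Rightarrow> (real^'n) set" where
  "cone_gen S = {x. \<exists>c. (\<forall>v\<in>S. 0 \<le> c v) \<and> x = (\<Sum>v\<in>S. c v *\<^sub>R v)}"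

text \<open>A unimodular cone: generated by vectors that extend to a Z-basis of N
  (these are then exactly its primitive ray generators).\<close>
definition unimodular_cone :: "(real^'n) set \<Rightarrow> bool" where
  "unimodular_cone \<sigma> \<longleftrightarrow> (\<exists>S B. S \<subseteq> B \<and> lattice_basis B \<and> \<sigma> = cone_gen S)"

definition is_fan :: "(real^'n) set set \<Rightarrow> bool" where
  "is_fan \<Sigma> \<longleftrightarrow> finite \<Sigma> \<and>
     (\<forall>\<sigma>\<in>\<Sigma>. \<exists>S. finite S \<and> (\<forall>v\<in>S. lattice_pt v) \<and> \<sigma> = cone_gen S) \<and>
     (\<forall>\<sigma>\<in>\<Sigma>. \<forall>\<tau>. \<tau> face_of \<sigma> \<and> \<tau> \<noteq> {} \<longrightarrow> \<tau> \<in> \<Sigma>) \<and>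
     (\<forall>\<sigma>\<in>\<Sigma>. \<forall>\<tau>\<in>\<Sigma>. (\<sigma> \<inter> \<tau>) face_of \<sigma> \<and> (\<sigma> \<inter> \<tau>) face_of \<tau>)"

definition complete_fan :: "(real^'n) set set \<Rightarrow> bool" where
  "complete_fan \<Sigma> \<longleftrightarrow> is_fan \<Sigma> \<and> \<Union>\<Sigma> = UNIV"

definition unimodular_fan :: "(real^'n) set set \<Rightarrow> bool" where
  "unimodular_fan \<Sigma> \<longleftrightarrow> is_fan \<Sigma> \<and> {0} \<in> \<Sigma> \<and> (\<forall>\<sigma>\<in>\<Sigma>. unimodular_cone \<sigma>)"

definition PL :: "(real^'n) set set \<Rightarrow> (real^'n \<Rightarrow> real) set" where
  "PL \<Sigma> = {f. \<forall>\<sigma>\<in>\<Sigma>. \<exists>m. lattice_pt m \<and> (\<forall>x\<in>\<sigma>. f x = m \<bullet> x)}"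

definition Sigma_fm :: "(real^'n) set set \<Rightarrow> (real^'n \<Rightarrow> real) \<Rightarrow> real^'n \<Rightarrow> (real^'n) set set" where
  "Sigma_fm \<Sigma> f m = {\<sigma>\<in>\<Sigma>. \<forall>x\<in>\<sigma>. m \<bullet> x \<le> f x}"

end

theory Submission
  imports Defs
begin

lemma cc_sum_closed:
  assumes "convex_cone C" "finite A" "\<And>a. a \<in> A \<Longrightarrow> g a \<in> C"
  shows "sum g A \<in> C"
  using assms(2,3)
proof (induction A rule: finite_induct)
  case empty then show ?case using convex_cone_contains_0[OF assms(1)] by simp
next
  case (insert a A) then show ?case using convex_cone_add[OF assms(1)] by simp
qed

lemma cone_gen_sub_cc:
  assumes "convex_cone C" "finite G" "G \<subseteq> C"
  shows "cone_gen G \<subseteq> C"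
proof
  fix x assume "x \<in> cone_gen G"
  then obtain c where c: "\<forall>v\<in>G. 0 \<le> c v" "x = (\<Sum>v\<in>G. c v *\<^sub>R v)" unfolding cone_gen_def by blast
  show "x \<in> C" unfolding c(2)
    by (rule cc_sum_closed[OF assms(1,2)]) (use c(1) assms(3) convex_cone_scaleR[OF assms(1)] in blast)
qed

lemma convex_cone_cone_gen: "convex_cone (cone_gen S)"
  unfolding convex_cone_iff
proof (intro conjI ballI allI impI)
  show "0 \<in> cone_gen S" unfolding cone_gen_def by (rule CollectI, rule exI[of _ "\<lambda>_. 0"]) simp
next
  fix x y assume "x \<in> cone_gen S" "y \<in> cone_gen S"
  then obtain c d where "\<forall>v\<in>S. 0 \<le> c v" "x = (\<Sum>v\<in>S. c v *\<^sub>R v)" "\<forall>v\<in>S. 0 \<le> d v" "y = (\<Sum>v\<in>S. d v *\<^sub>R v)" unfolding cone_gen_def by blast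
  then show "x + y \<in> cone_gen S" unfolding cone_gen_def
    by (intro CollectI exI[of _ "\<lambda>v. c v + d v"]) (simp add: scaleR_add_left sum.distrib)
next
  fix x and c :: real assume "x \<in> cone_gen S" "0 \<le> c"
  then obtain d where "\<forall>v\<in>S. 0 \<le> d v" "x = (\<Sum>v\<in>S. d v *\<^sub>R v)" unfolding cone_gen_def by blast
  then show "c *\<^sub>R x \<in> cone_gen S" unfolding cone_gen_def using \<open>0 \<le> c\<close>
    by (intro CollectI exI[of _ "\<lambda>v. c * d v"]) (simp add: scaleR_sum_right)
qed

lemma convex_cone_gen: "convex (cone_gen S)"
  using convex_cone_cone_gen[of S] unfolding convex_cone_def by blast

lemma conic_cone_gen: "conic (cone_gen S)"
  using convex_cone_cone_gen[of S] unfolding convex_cone_def by blast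

lemma zero_cone_gen: "0 \<in> cone_gen S"
  using convex_cone_cone_gen convex_cone_contains_0 by blast

lemma gen_in_cone_gen:
  assumes "finite S" "v \<in> S"
  shows "v \<in> cone_gen S"
proof -
  have "(\<Sum>u\<in>S. (if u = v then 1 else 0) *\<^sub>R u) = (\<Sum>u\<in>S. if u = v then u else 0)"
    by (rule sum.cong) auto
  also have "\<dots> = v" using assms by (simp add: sum.delta')
  finally show ?thesis unfolding cone_gen_def
    by (intro CollectI exI[of _ "\<lambda>u. if u = v then 1 else 0"]) auto
qed

lemma cone_gen_mono:
  assumes "finite G" "G \<subseteq> cone_gen P"
  shows "cone_gen G \<subseteq> cone_gen P"
  using cone_gen_sub_cc[OF convex_cone_cone_gen assms] .

lemma cone_gen_hull:
  assumes "finite S"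
  shows "cone_gen S = convex_cone hull S"
proof
  show "cone_gen S \<subseteq> convex_cone hull S"
    by (rule cone_gen_sub_cc[OF convex_cone_convex_cone_hull assms hull_subset])
  show "convex_cone hull S \<subseteq> cone_gen S"
    by (rule hull_minimal) (use gen_in_cone_gen[OF assms] convex_cone_cone_gen in auto)
qed

lemma closed_cone_gen:
  fixes S :: "(real^'n) set"
  assumes "finite S" shows "closed (cone_gen S)"
  using closed_convex_cone_hull[OF assms] cone_gen_hull[OF assms] by simp

lemma coords_unique:
  fixes P :: "(real^'n) set"
  assumes "independent P" "(\<Sum>v\<in>P. c v *\<^sub>R v) = (\<Sum>v\<in>P. d v *\<^sub>R v)" "u \<in> P"
  shows "c u = d u"
proof -
  have "(\<Sum>v\<in>P. (c v - d v) *\<^sub>R v) = 0" using assms(2) by (simp add: scaleR_diff_left sum_subtractf)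
  moreover have H: "\<forall>c. (\<Sum>v\<in>P. c v *\<^sub>R v) = 0 \<longrightarrow> (\<forall>v\<in>P. c v = 0)"
    using assms(1) independent_explicit by blast
  ultimately have "c u - d u = 0" using assms(3) spec[OF H, of "\<lambda>v. c v - d v"] by blast
  then show ?thesis by simp
qed


lemma sum_extend:
  fixes S :: "(real^'n) set"
  assumes "finite S" "P \<subseteq> S"
  shows "(\<Sum>v\<in>P. c v *\<^sub>R v) = (\<Sum>v\<in>S. (if v \<in> P then c v else 0) *\<^sub>R v)"
proof -
  have "(\<Sum>v\<in>S. (if v \<in> P then c v else 0) *\<^sub>R v) = (\<Sum>v\<in>P. (if v \<in> P then c v else 0) *\<^sub>R v)"
    by (rule sum.mono_neutral_right) (use assms in auto)
  also have "\<dots> = (\<Sum>v\<in>P. c v *\<^sub>R v)" by (rule sum.cong) auto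
  finally show ?thesis by simp
qed

lemma sum_restrict:
  fixes S :: "(real^'n) set"
  assumes "finite S" "P \<subseteq> S" "\<forall>v\<in>S-P. c v = 0"
  shows "(\<Sum>v\<in>S. c v *\<^sub>R v) = (\<Sum>v\<in>P. c v *\<^sub>R v)"
  by (rule sum.mono_neutral_right) (use assms finite_subset in auto)

lemma cone_gen_face:
  fixes S :: "(real^'n) set"
  assumes ind: "independent S" and PS: "P \<subseteq> S"
  shows "cone_gen P face_of cone_gen S"
proof -
  have fS: "finite S" using ind independent_explicit by blast
  have fP: "finite P" using fS PS finite_subset by blast
  have sub: "cone_gen P \<subseteq> cone_gen S"
    by (rule cone_gen_mono[OF fP]) (use PS gen_in_cone_gen[OF fS] in blast)
  have key: "a \<in> cone_gen P" if a: "a \<in> cone_gen S" and b: "b \<in> cone_gen S" and x: "x \<in> cone_gen P"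
     and u: "0 < u" "u < 1" and xe: "x = (1 - u) *\<^sub>R a + u *\<^sub>R b" for a b x u
  proof -
    obtain \<alpha> where \<alpha>: "\<forall>v\<in>S. 0 \<le> \<alpha> v" "a = (\<Sum>v\<in>S. \<alpha> v *\<^sub>R v)" using a unfolding cone_gen_def by blast
    obtain \<beta> where \<beta>: "\<forall>v\<in>S. 0 \<le> \<beta> v" "b = (\<Sum>v\<in>S. \<beta> v *\<^sub>R v)" using b unfolding cone_gen_def by blast
    obtain \<gamma> where \<gamma>: "\<forall>v\<in>P. 0 \<le> \<gamma> v" "x = (\<Sum>v\<in>P. \<gamma> v *\<^sub>R v)" using x unfolding cone_gen_def by blast
    have E: "(\<Sum>v\<in>S. (if v \<in> P then \<gamma> v else 0) *\<^sub>R v) = (\<Sum>v\<in>S. ((1 - u) * \<alpha> v + u * \<beta> v) *\<^sub>R v)"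
      using xe \<alpha>(2) \<beta>(2) \<gamma>(2) sum_extend[OF fS PS, of \<gamma>]
      by (simp add: scaleR_add_left sum.distrib scaleR_sum_right)
    then have eq: "(if v \<in> P then \<gamma> v else 0) = (1 - u) * \<alpha> v + u * \<beta> v" if "v \<in> S" for v
      using coords_unique[OF ind E that] by simp
    have z: "\<alpha> v = 0" if "v \<in> S - P" for v
    proof -
      have "(1 - u) * \<alpha> v + u * \<beta> v = 0" using eq[of v] that by auto
      moreover have "0 \<le> (1 - u) * \<alpha> v" "0 \<le> u * \<beta> v" using \<alpha>(1) \<beta>(1) u that by auto
      ultimately have "(1 - u) * \<alpha> v = 0" by linarith
      then show ?thesis using u by simp
    qed
    have "a = (\<Sum>v\<in>P. \<alpha> v *\<^sub>R v)" using \<alpha>(2) sum_restrict[OF fS PS] z by simp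
    then show ?thesis unfolding cone_gen_def using \<alpha>(1) PS by blast
  qed
  show ?thesis unfolding face_of_def
  proof (intro conjI sub convex_cone_gen ballI impI)
    fix a b x assume a: "a \<in> cone_gen S" and b: "b \<in> cone_gen S" and x: "x \<in> cone_gen P"
      and seg: "x \<in> open_segment a b"
    then obtain u where u: "0 < u" "u < 1" "x = (1 - u) *\<^sub>R a + u *\<^sub>R b"
      unfolding in_segment by blast
    show "a \<in> cone_gen P" using key[OF a b x u] .
  next
    fix a b x assume a: "a \<in> cone_gen S" and b: "b \<in> cone_gen S" and x: "x \<in> cone_gen P"
      and seg: "x \<in> open_segment a b"
    then obtain u where u: "0 < u" "u < 1" "x = (1 - u) *\<^sub>R a + u *\<^sub>R b"
      unfolding in_segment by blast
    show "b \<in> cone_gen P"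
      by (rule key[OF b a x, of "1 - u"]) (use u in \<open>auto simp: algebra_simps\<close>)
  qed
qed


lemma indep_finite: "independent (P :: (real^'n) set) \<Longrightarrow> finite P"
  using independent_explicit by blast

lemma indep_nonzero: "independent (P :: (real^'n) set) \<Longrightarrow> u \<in> P \<Longrightarrow> u \<noteq> 0"
  using dependent_zero by blast

lemma face_gen_in:
  fixes P :: "(real^'n) set"
  assumes ind: "independent P" and F: "F face_of cone_gen P" and yF: "y \<in> F"
    and c: "\<forall>v\<in>P. 0 \<le> c v" and y: "y = (\<Sum>v\<in>P. c v *\<^sub>R v)" and uP: "u \<in> P" and cu: "0 < c u"
  shows "u \<in> F"
proof -
  have fP: "finite P" using indep_finite[OF ind] .
  have conF: "conic F" using face_of_conic[OF conic_cone_gen F] .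
  define a where "a = (\<Sum>v\<in>P-{u}. c v *\<^sub>R v)"
  have ya: "y = a + c u *\<^sub>R u" unfolding y a_def using fP uP by (simp add: sum.remove)
  have "a \<in> cone_gen (P - {u})" unfolding a_def cone_gen_def using c by blast
  moreover have "cone_gen (P - {u}) \<subseteq> cone_gen P"
    by (rule cone_gen_mono) (use fP gen_in_cone_gen[OF fP] in auto)
  ultimately have aP: "a \<in> cone_gen P" by blast
  define p where "p = (2::real) *\<^sub>R a"
  define q where "q = (2 * c u) *\<^sub>R u"
  have pP: "p \<in> cone_gen P" unfolding p_def using conic_cone_gen aP conicD by fastforce
  have qP: "q \<in> cone_gen P" unfolding q_def using conic_cone_gen gen_in_cone_gen[OF fP uP] conicD cu by fastforce
  have yseg: "y = (1 - 1/2) *\<^sub>R p + (1/2) *\<^sub>R q" unfolding p_def q_def ya by (simp add: algebra_simps)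
  have qF: "q \<in> F"
  proof (cases "p = q")
    case True then show ?thesis using yseg yF by (simp add: scaleR_left_distrib[symmetric])
  next
    case False
    then have "y \<in> open_segment p q" unfolding in_segment using yseg
      by (intro conjI exI[of _ "1/2"]) auto
    then show ?thesis using F pP qP yF unfolding face_of_def by blast
  qed
  have "(1 / (2 * c u)) *\<^sub>R q = u" unfolding q_def using cu by simp
  then show ?thesis using conicD[OF conF qF, of "1 / (2 * c u)"] cu by simp
qed

lemma cone_gen_span: "cone_gen G \<subseteq> span (G :: (real^'n) set)"
proof
  fix x assume "x \<in> cone_gen G"
  then obtain c where "x = (\<Sum>v\<in>G. c v *\<^sub>R v)" unfolding cone_gen_def by blast
  then show "x \<in> span G" by (simp add: span_sum span_scale span_base)
qed

lemma dim_cone_gen: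
  fixes G :: "(real^'n) set"
  assumes "independent G"
  shows "dim (cone_gen G) = card G"
proof -
  have fG: "finite G" using indep_finite[OF assms] .
  have "span (cone_gen G) = span G"
  proof
    show "span (cone_gen G) \<subseteq> span G" using span_mono[OF cone_gen_span[of G]] span_span by blast
    show "span G \<subseteq> span (cone_gen G)" by (rule span_mono) (use gen_in_cone_gen[OF fG] in blast)
  qed
  then have "dim (cone_gen G) = dim (span G)" by (metis dim_span)
  then show ?thesis using dim_span_eq_card_independent[OF assms] by simp
qed

lemma sum_single:
  fixes B :: "(real^'n) set"
  assumes "finite B" "u \<in> B"
  shows "(\<Sum>b\<in>B. (if b = u then r else 0) *\<^sub>R b) = r *\<^sub>R u"
proof -
  have "(\<Sum>b\<in>B. (if b = u then r else 0) *\<^sub>R b) = (\<Sum>b\<in>B. if b = u then r *\<^sub>R u else 0)"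
    by (rule sum.cong) auto
  then show ?thesis using assms by (simp add: sum.delta')
qed

lemma lattice_basis_indep: "lattice_basis B \<Longrightarrow> independent B"
  unfolding lattice_basis_def by blast

lemma lattice_basis_finite: "lattice_basis B \<Longrightarrow> finite B"
  unfolding lattice_basis_def by blast

lemma coeff_int:
  assumes B: "lattice_basis B" and v: "lattice_pt v" and uB: "u \<in> B" and vu: "v = r *\<^sub>R u"
  shows "r \<in> \<int>"
proof -
  obtain c where c: "\<forall>b\<in>B. c b \<in> \<int>" "v = (\<Sum>b\<in>B. c b *\<^sub>R b)"
    using B v unfolding lattice_basis_def by blast
  have "(\<Sum>b\<in>B. c b *\<^sub>R b) = (\<Sum>b\<in>B. (if b = u then r else 0) *\<^sub>R b)"
    using c(2) vu sum_single[OF lattice_basis_finite[OF B] uB] by simp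
  then have "c u = (if u = u then r else 0)"
    by (rule coords_unique[OF lattice_basis_indep[OF B] _ uB])
  moreover have "c u \<in> \<int>" using c(1) uB by blast
  ultimately show ?thesis by simp
qed

lemma primitive:
  assumes B1: "lattice_basis B1" and B2: "lattice_basis B2" and sB: "s \<in> B1" and uB: "u \<in> B2"
    and us: "u = t *\<^sub>R s" and t: "0 < t"
  shows "t = 1"
proof -
  have sl: "lattice_pt s" using B1 sB unfolding lattice_basis_def by blast
  have ul: "lattice_pt u" using B2 uB unfolding lattice_basis_def by blast
  have "t \<in> \<int>" by (rule coeff_int[OF B1 ul sB us])
  moreover have "s = (1/t) *\<^sub>R u" using us t by simp
  then have "1/t \<in> \<int>" by (rule coeff_int[OF B2 sl uB])
  ultimately obtain k l where k: "t = of_int k" and l: "1/t = of_int l" by (metis Ints_cases)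
  have "real_of_int k \<noteq> 0" using k t by simp
  then have "of_int (k * l) = (1::real)" using l k by (simp add: field_simps)
  then have "k * l = 1" by (metis of_int_eq_1_iff)
  moreover have "k > 0" using k t by simp
  ultimately have "k = 1" by (metis pos_zmult_eq_1_iff)
  then show ?thesis using k by simp
qed


lemma gens_sub:
  fixes S1 S2 :: "(real^'n) set"
  assumes B1: "lattice_basis B1" and B2: "lattice_basis B2" and S1: "S1 \<subseteq> B1" and S2: "S2 \<subseteq> B2"
    and eq: "cone_gen S1 = cone_gen S2"
  shows "S1 \<subseteq> S2"
proof
  fix s assume s: "s \<in> S1"
  have i1: "independent S1" using independent_mono[OF lattice_basis_indep[OF B1] S1] .
  have i2: "independent S2" using independent_mono[OF lattice_basis_indep[OF B2] S2] .
  have f1: "finite S1" using indep_finite[OF i1] .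
  have F: "cone_gen {s} face_of cone_gen S2" using cone_gen_face[OF i1, of "{s}"] s eq by simp
  have "s \<in> cone_gen S2" using gen_in_cone_gen[OF f1 s] eq by simp
  then obtain c where c: "\<forall>v\<in>S2. 0 \<le> c v" "s = (\<Sum>v\<in>S2. c v *\<^sub>R v)" unfolding cone_gen_def by blast
  have s0: "s \<noteq> 0" using indep_nonzero[OF i1 s] .
  have "\<exists>u\<in>S2. c u \<noteq> 0"
  proof (rule ccontr)
    assume "\<not> (\<exists>u\<in>S2. c u \<noteq> 0)"
    then have "s = 0" using c(2) by simp
    then show False using s0 by simp
  qed
  then obtain u where u: "u \<in> S2" "c u \<noteq> 0" by blast
  then have cu: "0 < c u" using c(1) by force
  have "u \<in> cone_gen {s}"
    by (rule face_gen_in[OF i2 F _ c(1) c(2) u(1) cu]) (rule gen_in_cone_gen, auto)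
  then obtain d where d: "0 \<le> d s" "u = d s *\<^sub>R s" unfolding cone_gen_def by auto
  have "d s \<noteq> 0" using d indep_nonzero[OF i2 u(1)] by auto
  then have "d s > 0" using d(1) by simp
  then have "d s = 1" using primitive[OF B1 B2 _ _ d(2)] s S1 u(1) S2 by blast
  then show "s \<in> S2" using d(2) u(1) by simp
qed

definition gens :: "(real^'n) set \<Rightarrow> (real^'n) set" where
  "gens \<sigma> = (SOME S. \<exists>B. S \<subseteq> B \<and> lattice_basis B \<and> \<sigma> = cone_gen S)"

lemma gens_prop:
  assumes "unimodular_cone \<sigma>"
  shows "\<exists>B. gens \<sigma> \<subseteq> B \<and> lattice_basis B \<and> \<sigma> = cone_gen (gens \<sigma>)"
  using someI_ex[OF assms[unfolded unimodular_cone_def]] unfolding gens_def .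

lemma gens_cone_gen:
  assumes "S \<subseteq> B" "lattice_basis B"
  shows "gens (cone_gen S) = S"
proof -
  have "unimodular_cone (cone_gen S)" unfolding unimodular_cone_def using assms by blast
  from gens_prop[OF this] obtain B' where B': "gens (cone_gen S) \<subseteq> B'" "lattice_basis B'"
    "cone_gen S = cone_gen (gens (cone_gen S))" by blast
  show ?thesis
    using gens_sub[OF assms(2) B'(2) assms(1) B'(1) B'(3)] gens_sub[OF B'(2) assms(2) B'(1) assms(1) B'(3)[symmetric]]
    by blast
qed


lemma ray_gen:
  fixes S1 S2 :: "(real^'n) set"
  assumes B1: "lattice_basis B1" and B2: "lattice_basis B2" and S1: "S1 \<subseteq> B1" and S2: "S2 \<subseteq> B2"
    and s: "s \<in> S1" and F: "cone_gen {s} face_of cone_gen S2"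
  shows "s \<in> S2"
proof -
  have i1: "independent S1" using independent_mono[OF lattice_basis_indep[OF B1] S1] .
  have i2: "independent S2" using independent_mono[OF lattice_basis_indep[OF B2] S2] .
  have "s \<in> cone_gen {s}" by (rule gen_in_cone_gen) auto
  then have "s \<in> cone_gen S2" using F face_of_imp_subset by blast
  then obtain c where c: "\<forall>v\<in>S2. 0 \<le> c v" "s = (\<Sum>v\<in>S2. c v *\<^sub>R v)" unfolding cone_gen_def by blast
  have s0: "s \<noteq> 0" using indep_nonzero[OF i1 s] .
  have "\<exists>u\<in>S2. c u \<noteq> 0"
  proof (rule ccontr)
    assume "\<not> (\<exists>u\<in>S2. c u \<noteq> 0)"
    then have "s = 0" using c(2) by simp
    then show False using s0 by simp
  qed
  then obtain u where u: "u \<in> S2" "c u \<noteq> 0" by blast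
  then have cu: "0 < c u" using c(1) by force
  have "u \<in> cone_gen {s}"
    by (rule face_gen_in[OF i2 F _ c(1) c(2) u(1) cu]) (rule gen_in_cone_gen, auto)
  then obtain d where d: "0 \<le> d s" "u = d s *\<^sub>R s" unfolding cone_gen_def by auto
  have "d s \<noteq> 0" using d indep_nonzero[OF i2 u(1)] by auto
  then have "d s > 0" using d(1) by simp
  then have "d s = 1" using primitive[OF B1 B2 _ _ d(2)] s S1 u(1) S2 by blast
  then show "s \<in> S2" using d(2) u(1) by simp
qed

definition coord :: "(real^'n) set \<Rightarrow> real^'n \<Rightarrow> real^'n \<Rightarrow> real" where
  "coord P w = (SOME c. w = (\<Sum>v\<in>P. c v *\<^sub>R v))"

lemma coord_sum:
  assumes "finite P" "w \<in> span P"
  shows "w = (\<Sum>v\<in>P. coord P w v *\<^sub>R v)"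
proof -
  have "\<exists>c. w = (\<Sum>v\<in>P. c v *\<^sub>R v)" using assms span_finite[OF assms(1)] by auto
  then show ?thesis unfolding coord_def by (rule someI_ex)
qed

lemma coord_eq:
  assumes "independent P" "w = (\<Sum>v\<in>P. d v *\<^sub>R v)" "v \<in> P"
  shows "coord P w v = d v"
proof -
  have "w \<in> span P" unfolding assms(2) by (simp add: span_sum span_scale span_base)
  then have "w = (\<Sum>v\<in>P. coord P w v *\<^sub>R v)" using coord_sum indep_finite[OF assms(1)] by blast
  then show ?thesis using coords_unique[OF assms(1) _ assms(3), of "coord P w" d] assms(2) by simp
qed

lemma bool_sum_zero:
  assumes fQ: "finite Q" and RQ: "R \<noteq> Q"
  shows "(\<Sum>G\<in>{G. R \<subseteq> G \<and> G \<subseteq> Q}. (-1::int) ^ card G) = 0"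
proof (cases "R \<subseteq> Q")
  case False
  then have "{G. R \<subseteq> G \<and> G \<subseteq> Q} = {}" by blast
  then show ?thesis by (metis sum.empty)
next
  case True
  then obtain q where q: "q \<in> Q" "q \<notin> R" using RQ by blast
  define A where "A = {G. R \<subseteq> G \<and> G \<subseteq> Q - {q}}"
  have fA: "finite A" unfolding A_def by (rule finite_subset[of _ "Pow Q"]) (use fQ in auto)
  have split: "{G. R \<subseteq> G \<and> G \<subseteq> Q} = A \<union> insert q ` A"
  proof
    show "{G. R \<subseteq> G \<and> G \<subseteq> Q} \<subseteq> A \<union> insert q ` A"
    proof
      fix G assume G: "G \<in> {G. R \<subseteq> G \<and> G \<subseteq> Q}"
      show "G \<in> A \<union> insert q ` A"
      proof (cases "q \<in> G")
        case True
        then have "G = insert q (G - {q})" by blast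
        moreover have "G - {q} \<in> A" unfolding A_def using G q by blast
        ultimately show ?thesis by blast
      next
        case False then show ?thesis unfolding A_def using G by blast
      qed
    qed
    show "A \<union> insert q ` A \<subseteq> {G. R \<subseteq> G \<and> G \<subseteq> Q}" unfolding A_def using q by blast
  qed
  have disj: "A \<inter> insert q ` A = {}" unfolding A_def by blast
  have inj: "inj_on (insert q) A" unfolding A_def inj_on_def by blast
  have "(\<Sum>G\<in>insert q ` A. (-1::int) ^ card G) = (\<Sum>G\<in>A. (-1::int) ^ card (insert q G))"
    by (rule sum.reindex[OF inj, unfolded comp_def])
  also have "\<dots> = (\<Sum>G\<in>A. - ((-1::int) ^ card G))"
  proof (rule sum.cong[OF refl])
    fix G assume "G \<in> A"
    then have "q \<notin> G" "finite G" unfolding A_def using fQ finite_subset by blast+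
    then show "(-1::int) ^ card (insert q G) = - ((-1) ^ card G)" by simp
  qed
  finally have "(\<Sum>G\<in>insert q ` A. (-1::int) ^ card G) = - (\<Sum>G\<in>A. (-1::int) ^ card G)"
    by (simp add: sum_negf)
  then show ?thesis unfolding split sum.union_disjoint[OF fA finite_imageI[OF fA] disj] by simp
qed

lemma finite_lattice_ball:
  fixes K :: real
  shows "finite {m :: real^'n. lattice_pt m \<and> norm m \<le> K}"
proof -
  define A where "A = (of_int :: int \<Rightarrow> real) ` {-\<lceil>K\<rceil>..\<lceil>K\<rceil>}"
  have fA: "finite A" unfolding A_def by simp
  have "{m :: real^'n. lattice_pt m \<and> norm m \<le> K} \<subseteq> (\<lambda>g. \<chi> i. g i) ` (PiE UNIV (\<lambda>_. A))"
  proof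
    fix m :: "real^'n" assume m: "m \<in> {m. lattice_pt m \<and> norm m \<le> K}"
    have "m $ i \<in> A" for i
    proof -
      have "m $ i \<in> \<int>" using m unfolding lattice_pt_def by blast
      then obtain k where k: "m $ i = of_int k" using Ints_cases by blast
      have "\<bar>m $ i\<bar> \<le> K" using m component_le_norm_cart[of m i] by simp
      then have kK: "real_of_int k \<le> K" "- real_of_int k \<le> K" using k by linarith+
      have cK: "K \<le> real_of_int \<lceil>K\<rceil>" by (rule le_of_int_ceiling)
      have "real_of_int k \<le> real_of_int \<lceil>K\<rceil>" using kK cK by linarith
      moreover have "real_of_int (- k) \<le> real_of_int \<lceil>K\<rceil>"
        unfolding of_int_minus using kK cK by linarith
      ultimately have "k \<le> \<lceil>K\<rceil>" "- k \<le> \<lceil>K\<rceil>" by (simp_all only: of_int_le_iff)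
      then have "k \<in> {-\<lceil>K\<rceil>..\<lceil>K\<rceil>}" by simp
      then show ?thesis unfolding A_def k by blast
    qed
    then have "(\<lambda>i. m $ i) \<in> PiE UNIV (\<lambda>_. A)" by auto
    moreover have "m = (\<chi> i. (\<lambda>i. m $ i) i)" by simp
    ultimately show "m \<in> (\<lambda>g. \<chi> i. g i) ` (PiE UNIV (\<lambda>_. A))" by blast
  qed
  moreover have "finite (PiE (UNIV :: 'n set) (\<lambda>_. A))" by (rule finite_PiE) (use fA in auto)
  ultimately show ?thesis using finite_subset by blast
qed


locale fanctx =
  fixes \<Sigma> :: "(real^'n) set set"
  assumes cf: "complete_fan \<Sigma>" and uf: "unimodular_fan \<Sigma>"
begin

lemma isfan: "is_fan \<Sigma>" using cf unfolding complete_fan_def by blast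
lemma fin: "finite \<Sigma>" using isfan unfolding is_fan_def by blast
lemma covers: "\<Union>\<Sigma> = UNIV" using cf unfolding complete_fan_def by blast
lemma faces: "\<sigma> \<in> \<Sigma> \<Longrightarrow> \<tau> face_of \<sigma> \<Longrightarrow> \<tau> \<noteq> {} \<Longrightarrow> \<tau> \<in> \<Sigma>"
  using isfan unfolding is_fan_def by blast
lemma inter_face: "\<sigma> \<in> \<Sigma> \<Longrightarrow> \<tau> \<in> \<Sigma> \<Longrightarrow> (\<sigma> \<inter> \<tau>) face_of \<sigma>"
  using isfan unfolding is_fan_def by blast
lemma inter_face2: "\<sigma> \<in> \<Sigma> \<Longrightarrow> \<tau> \<in> \<Sigma> \<Longrightarrow> (\<sigma> \<inter> \<tau>) face_of \<tau>"
  using isfan unfolding is_fan_def by blast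

lemma gensB: "\<sigma> \<in> \<Sigma> \<Longrightarrow> \<exists>B. gens \<sigma> \<subseteq> B \<and> lattice_basis B \<and> \<sigma> = cone_gen (gens \<sigma>)"
  using uf gens_prop unfolding unimodular_fan_def by blast

lemma gens_eq: "\<sigma> \<in> \<Sigma> \<Longrightarrow> \<sigma> = cone_gen (gens \<sigma>)"
  using gensB by blast

lemma gens_indep: "\<sigma> \<in> \<Sigma> \<Longrightarrow> independent (gens \<sigma>)"
  using gensB independent_mono lattice_basis_indep by metis

lemma gens_fin: "\<sigma> \<in> \<Sigma> \<Longrightarrow> finite (gens \<sigma>)"
  using gens_indep indep_finite by blast

lemma sub_cone:
  assumes "\<sigma> \<in> \<Sigma>" "G \<subseteq> gens \<sigma>"
  shows "cone_gen G \<in> \<Sigma>" "gens (cone_gen G) = G"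
proof -
  obtain B where B: "gens \<sigma> \<subseteq> B" "lattice_basis B" using gensB[OF assms(1)] by blast
  have "cone_gen G face_of \<sigma>"
    using cone_gen_face[OF gens_indep[OF assms(1)] assms(2)] gens_eq[OF assms(1), symmetric] by simp
  then show "cone_gen G \<in> \<Sigma>" using faces[OF assms(1)] zero_cone_gen by blast
  show "gens (cone_gen G) = G" using gens_cone_gen[of G B] B assms(2) by blast
qed

lemma dim_gens: "\<sigma> \<in> \<Sigma> \<Longrightarrow> dim \<sigma> = card (gens \<sigma>)"
  using dim_cone_gen[OF gens_indep] gens_eq by metis

lemma sub_if_pos:
  assumes r1: "\<rho>1 \<in> \<Sigma>" and r2: "\<rho>2 \<in> \<Sigma>" and y2: "y \<in> \<rho>2"
    and y: "y = (\<Sum>v\<in>gens \<rho>1. d v *\<^sub>R v)" and d: "\<forall>v\<in>gens \<rho>1. 0 < d v"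
  shows "\<rho>1 \<subseteq> \<rho>2"
proof -
  have y1: "y \<in> \<rho>1" using gens_eq[OF r1] y d unfolding cone_gen_def by (auto intro!: exI[of _ d] less_imp_le)
  have F: "(\<rho>1 \<inter> \<rho>2) face_of cone_gen (gens \<rho>1)" using inter_face[OF r1 r2] gens_eq[OF r1, symmetric] by simp
  have "gens \<rho>1 \<subseteq> \<rho>1 \<inter> \<rho>2"
  proof
    fix v assume v: "v \<in> gens \<rho>1"
    show "v \<in> \<rho>1 \<inter> \<rho>2"
      by (rule face_gen_in[OF gens_indep[OF r1] F _ _ y v]) (use y1 y2 d v in \<open>auto intro: less_imp_le\<close>)
  qed
  then have "cone_gen (gens \<rho>1) \<subseteq> cone_gen (gens \<rho>2)"
    using cone_gen_mono[OF gens_fin[OF r1]] gens_eq[OF r2] by blast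
  then show ?thesis using gens_eq[OF r1, symmetric] gens_eq[OF r2, symmetric] by simp
qed

definition Cr :: "real^'n \<Rightarrow> (real^'n) set \<Rightarrow> (real^'n) set \<Rightarrow> bool" where
  "Cr w \<tau> \<rho> \<longleftrightarrow> gens \<tau> \<subseteq> gens \<rho> \<and> w \<in> span (gens \<rho>) \<and>
      {v\<in>gens \<rho>. coord (gens \<rho>) w v \<le> 0} \<subseteq> gens \<tau>"

lemma pos_coords:
  assumes r: "\<rho> \<in> \<Sigma>" and C: "Cr w \<tau> \<rho>" and e: "0 < e"
    and small: "\<forall>v\<in>gens \<rho>. e * \<bar>coord (gens \<rho>) w v\<bar> < 1"
  shows "\<exists>d. (\<Sum>v\<in>gens \<tau>. v) + e *\<^sub>R w = (\<Sum>v\<in>gens \<rho>. d v *\<^sub>R v) \<and> (\<forall>v\<in>gens \<rho>. 0 < d v)"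
proof -
  let ?P = "gens \<rho>" and ?G = "gens \<tau>" and ?c = "coord (gens \<rho>) w"
  have fP: "finite ?P" using gens_fin[OF r] .
  have GP: "?G \<subseteq> ?P" using C unfolding Cr_def by blast
  have w: "w = (\<Sum>v\<in>?P. ?c v *\<^sub>R v)" using coord_sum[OF fP] C unfolding Cr_def by blast
  have x: "(\<Sum>v\<in>?G. v) = (\<Sum>v\<in>?P. (if v \<in> ?G then 1 else 0) *\<^sub>R v)"
    using sum_extend[OF fP GP, of "\<lambda>_. 1"] by simp
  define d where "d v = (if v \<in> ?G then 1 else 0) + e * ?c v" for v
  have "(\<Sum>v\<in>?G. v) + e *\<^sub>R w = (\<Sum>v\<in>?P. d v *\<^sub>R v)"
    unfolding x d_def by (subst w) (simp add: scaleR_add_left sum.distrib scaleR_sum_right)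
  moreover have "0 < d v" if v: "v \<in> ?P" for v
  proof (cases "v \<in> ?G")
    case True
    have "- (e * ?c v) \<le> e * \<bar>?c v\<bar>" using e by (simp add: abs_if)
    then show ?thesis using small v True unfolding d_def by fastforce
  next
    case False
    then have "\<not> ?c v \<le> 0" using C v unfolding Cr_def by blast
    then show ?thesis using False e unfolding d_def by simp
  qed
  ultimately show ?thesis by blast
qed

lemma C_unique:
  assumes r1: "\<rho>1 \<in> \<Sigma>" and r2: "\<rho>2 \<in> \<Sigma>" and C1: "Cr w \<tau> \<rho>1" and C2: "Cr w \<tau> \<rho>2"
  shows "\<rho>1 = \<rho>2"
proof -
  define s where "s = 1 + (\<Sum>v\<in>gens \<rho>1. \<bar>coord (gens \<rho>1) w v\<bar>) + (\<Sum>v\<in>gens \<rho>2. \<bar>coord (gens \<rho>2) w v\<bar>)"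
  have s1: "s \<ge> 1" unfolding s_def by (simp add: sum_nonneg)
  define e where "e = 1 / s"
  have e: "0 < e" unfolding e_def using s1 by simp
  have small: "e * \<bar>coord (gens \<rho>) w v\<bar> < 1" if "\<rho> \<in> {\<rho>1, \<rho>2}" "v \<in> gens \<rho>" for \<rho> v
  proof -
    have le: "\<bar>coord (gens \<rho>) w v\<bar> \<le> (\<Sum>v\<in>gens \<rho>. \<bar>coord (gens \<rho>) w v\<bar>)"
      by (rule member_le_sum) (use that gens_fin r1 r2 in auto)
    have "(\<Sum>v\<in>gens \<rho>. \<bar>coord (gens \<rho>) w v\<bar>) < s" using that unfolding s_def
      by (auto simp: sum_nonneg add_strict_increasing add_pos_nonneg)
    then have "\<bar>coord (gens \<rho>) w v\<bar> < s" using le by linarith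
    then show ?thesis unfolding e_def using s1 by (simp add: field_simps)
  qed
  obtain d1 where d1: "(\<Sum>v\<in>gens \<tau>. v) + e *\<^sub>R w = (\<Sum>v\<in>gens \<rho>1. d1 v *\<^sub>R v)" "\<forall>v\<in>gens \<rho>1. 0 < d1 v"
    using pos_coords[OF r1 C1 e] small by blast
  obtain d2 where d2: "(\<Sum>v\<in>gens \<tau>. v) + e *\<^sub>R w = (\<Sum>v\<in>gens \<rho>2. d2 v *\<^sub>R v)" "\<forall>v\<in>gens \<rho>2. 0 < d2 v"
    using pos_coords[OF r2 C2 e] small by blast
  have y1: "(\<Sum>v\<in>gens \<tau>. v) + e *\<^sub>R w \<in> \<rho>1"
    using gens_eq[OF r1] d1 unfolding cone_gen_def by (auto intro!: exI[of _ d1] less_imp_le)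
  have y2: "(\<Sum>v\<in>gens \<tau>. v) + e *\<^sub>R w \<in> \<rho>2"
    using gens_eq[OF r2] d2 unfolding cone_gen_def by (auto intro!: exI[of _ d2] less_imp_le)
  show ?thesis using sub_if_pos[OF r1 r2 y2 d1] sub_if_pos[OF r2 r1 y1 d2] by blast
qed

lemma C_exists:
  assumes t: "\<tau> \<in> \<Sigma>"
  shows "\<exists>\<rho>\<in>\<Sigma>. Cr w \<tau> \<rho>"
proof -
  let ?G = "gens \<tau>"
  define x where "x = (\<Sum>v\<in>?G. v)"
  have fG: "finite ?G" using gens_fin[OF t] .
  have iG: "independent ?G" using gens_indep[OF t] .
  have xG: "x = (\<Sum>v\<in>?G. (\<lambda>_. 1::real) v *\<^sub>R v)" unfolding x_def by simp
  have "\<forall>k::nat. \<exists>\<rho>. \<rho> \<in> \<Sigma> \<and> x + (1 / (real k + 1)) *\<^sub>R w \<in> \<rho>" using covers by blast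
  then have "\<exists>rk. \<forall>k::nat. rk k \<in> \<Sigma> \<and> x + (1 / (real k + 1)) *\<^sub>R w \<in> rk k" by (rule choice)
  then obtain rk where rk0: "\<forall>k::nat. rk k \<in> \<Sigma> \<and> x + (1 / (real k + 1)) *\<^sub>R w \<in> rk k" by blast
  have rk: "\<And>k. rk k \<in> \<Sigma>" "\<And>k. x + (1 / (real k + 1)) *\<^sub>R w \<in> rk k" using rk0 by auto
  have frk: "finite (range rk)" by (rule finite_subset[OF _ fin]) (use rk(1) in blast)
  from inf_img_fin_dom[OF frk infinite_UNIV_nat] obtain \<rho>0 where r0rk: "\<rho>0 \<in> range rk"
    and inf: "infinite (rk -` {\<rho>0})" by blast
  have r0: "\<rho>0 \<in> \<Sigma>" using r0rk rk(1) by (metis rangeE)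
  define K where "K = rk -` {\<rho>0}"
  have inK: "x + (1 / (real k + 1)) *\<^sub>R w \<in> \<rho>0" if "k \<in> K" for k
  proof -
    have "rk k = \<rho>0" using that unfolding K_def by simp
    then show ?thesis using rk(2)[of k] by simp
  qed
  have unb: "\<forall>m. \<exists>n\<ge>m. n \<in> K" using inf unfolding K_def infinite_nat_iff_unbounded_le .
  have x0: "x \<in> \<rho>0"
  proof -
    have "closed \<rho>0" using closed_cone_gen[OF gens_fin[OF r0]] gens_eq[OF r0, symmetric] by simp
    moreover have "x \<in> closure \<rho>0" unfolding closure_approachable
    proof (intro allI impI)
      fix \<epsilon> :: real assume e: "\<epsilon> > 0"
      obtain N :: nat where N: "norm w / \<epsilon> < real N" using reals_Archimedean2 by blast
      obtain k where k: "k \<ge> N" "k \<in> K" using unb by blast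
      have "dist (x + (1 / (real k + 1)) *\<^sub>R w) x = norm w / (real k + 1)" by (simp add: dist_norm)
      also have "\<dots> < \<epsilon>"
      proof -
        have "norm w / \<epsilon> < real k + 1" using N k(1) by linarith
        then have "norm w < \<epsilon> * (real k + 1)" using e by (simp add: field_simps)
        then show ?thesis by (simp add: field_simps)
      qed
      finally show "\<exists>y\<in>\<rho>0. dist y x < \<epsilon>" using inK[OF k(2)] by blast
    qed
    ultimately show ?thesis using closure_closed by auto
  qed
  obtain k0 where "k0 \<in> K" using unb by blast
  define \<delta> where "\<delta> = 1 / (real k0 + 1)"
  have \<delta>: "0 < \<delta>" unfolding \<delta>_def by simp
  have xd: "x + \<delta> *\<^sub>R w \<in> \<rho>0" using inK[OF \<open>k0 \<in> K\<close>] unfolding \<delta>_def .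
  let ?P0 = "gens \<rho>0"
  obtain B0 where B0: "?P0 \<subseteq> B0" "lattice_basis B0" using gensB[OF r0] by blast
  obtain Bt where Bt: "?G \<subseteq> Bt" "lattice_basis Bt" using gensB[OF t] by blast
  have fP0: "finite ?P0" using gens_fin[OF r0] .
  have iP0: "independent ?P0" using gens_indep[OF r0] .
  have "x \<in> cone_gen ?P0" using x0 gens_eq[OF r0, symmetric] by simp
  then obtain a where a: "\<forall>v\<in>?P0. 0 \<le> a v" "x = (\<Sum>v\<in>?P0. a v *\<^sub>R v)" unfolding cone_gen_def by blast
  have "x + \<delta> *\<^sub>R w \<in> cone_gen ?P0" using xd gens_eq[OF r0, symmetric] by simp
  then obtain b where b: "\<forall>v\<in>?P0. 0 \<le> b v" "x + \<delta> *\<^sub>R w = (\<Sum>v\<in>?P0. b v *\<^sub>R v)" unfolding cone_gen_def by blast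
  define c where "c v = (b v - a v) / \<delta>" for v
  have "\<delta> *\<^sub>R w = (x + \<delta> *\<^sub>R w) - x" by simp
  also have "\<dots> = (\<Sum>v\<in>?P0. (b v - a v) *\<^sub>R v)" using a(2) b(2) by (simp add: sum_subtractf scaleR_diff_left)
  finally have "(1 / \<delta>) *\<^sub>R (\<delta> *\<^sub>R w) = (1 / \<delta>) *\<^sub>R (\<Sum>v\<in>?P0. (b v - a v) *\<^sub>R v)" by simp
  then have wc: "w = (\<Sum>v\<in>?P0. c v *\<^sub>R v)" unfolding c_def using \<delta> by (simp add: scaleR_sum_right)
  have F1: "(\<tau> \<inter> \<rho>0) face_of cone_gen ?G" using inter_face[OF t r0] gens_eq[OF t, symmetric] by simp
  have xt: "x \<in> \<tau> \<inter> \<rho>0"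
  proof -
    have "x \<in> cone_gen ?G" unfolding cone_gen_def using xG by (intro CollectI exI[of _ "\<lambda>_. 1"]) auto
    then show ?thesis using x0 gens_eq[OF t, symmetric] by simp
  qed
  have "?G \<subseteq> \<tau> \<inter> \<rho>0"
  proof
    fix g assume g: "g \<in> ?G"
    show "g \<in> \<tau> \<inter> \<rho>0" by (rule face_gen_in[OF iG F1 xt _ xG g]) auto
  qed
  then have tsub: "\<tau> \<subseteq> \<rho>0" using cone_gen_mono[OF fG, of ?P0] gens_eq[OF t, symmetric] gens_eq[OF r0, symmetric] by auto
  have tface: "\<tau> face_of \<rho>0" using inter_face2[OF t r0] tsub by (simp add: Int_absorb2)
  have GP0: "?G \<subseteq> ?P0"
  proof
    fix g assume g: "g \<in> ?G"
    have "cone_gen {g} face_of \<tau>" using cone_gen_face[OF iG, of "{g}"] g gens_eq[OF t, symmetric] by simp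
    then have "cone_gen {g} face_of cone_gen ?P0" using face_of_trans[OF _ tface] gens_eq[OF r0, symmetric] by simp
    then show "g \<in> ?P0" by (rule ray_gen[OF Bt(2) B0(2) Bt(1) B0(1) g])
  qed
  have ax: "a v = (if v \<in> ?G then 1 else 0)" if v: "v \<in> ?P0" for v
  proof -
    have "x = (\<Sum>v\<in>?P0. (if v \<in> ?G then 1 else 0) *\<^sub>R v)"
      using xG sum_extend[OF fP0 GP0, of "\<lambda>_. 1"] by simp
    then show ?thesis using coords_unique[OF iP0 _ v, of a] a(2) by simp
  qed
  define P where "P = {v\<in>?P0. a v \<noteq> 0 \<or> c v \<noteq> 0}"
  have PP0: "P \<subseteq> ?P0" unfolding P_def by blast
  have iP: "independent P" using independent_mono[OF iP0 PP0] .
  have rP: "cone_gen P \<in> \<Sigma>" "gens (cone_gen P) = P" using sub_cone[OF r0 PP0] by auto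
  have wP: "w = (\<Sum>v\<in>P. c v *\<^sub>R v)"
    using wc sum_restrict[OF fP0 PP0, of c] unfolding P_def by auto
  show ?thesis
  proof (rule bexI[OF _ rP(1)])
    show "Cr w \<tau> (cone_gen P)" unfolding Cr_def rP(2)
    proof (intro conjI)
      show "?G \<subseteq> P" using GP0 ax unfolding P_def by auto
      show "w \<in> span P" unfolding wP by (simp add: span_sum span_scale span_base)
      show "{v \<in> P. coord P w v \<le> 0} \<subseteq> ?G"
      proof
        fix v assume v: "v \<in> {v \<in> P. coord P w v \<le> 0}"
        then have vP: "v \<in> P" and cv: "c v \<le> 0" using coord_eq[OF iP wP] by auto
        show "v \<in> ?G"
        proof (rule ccontr)
          assume "v \<notin> ?G"
          then have av: "a v = 0" using ax vP PP0 by auto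
          then have "c v < 0" using vP cv unfolding P_def by auto
          moreover have "b v = a v + \<delta> * c v" unfolding c_def using \<delta> by simp
          moreover have "0 \<le> b v" using b(1) vP PP0 by auto
          ultimately show False using av \<delta> mult_pos_neg[of \<delta> "c v"] by linarith
        qed
      qed
    qed
  qed
qed

lemma Sfm_iff:
  assumes fPL: "f \<in> PL \<Sigma>"
  shows "\<sigma> \<in> Sigma_fm \<Sigma> f m \<longleftrightarrow> \<sigma> \<in> \<Sigma> \<and> gens \<sigma> \<subseteq> {v. m \<bullet> v \<le> f v}"
proof
  assume s: "\<sigma> \<in> Sigma_fm \<Sigma> f m"
  then have s\<Sigma>: "\<sigma> \<in> \<Sigma>" unfolding Sigma_fm_def by blast
  have "gens \<sigma> \<subseteq> \<sigma>" using gen_in_cone_gen[OF gens_fin[OF s\<Sigma>]] gens_eq[OF s\<Sigma>] by blast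
  then show "\<sigma> \<in> \<Sigma> \<and> gens \<sigma> \<subseteq> {v. m \<bullet> v \<le> f v}" using s unfolding Sigma_fm_def by blast
next
  assume s: "\<sigma> \<in> \<Sigma> \<and> gens \<sigma> \<subseteq> {v. m \<bullet> v \<le> f v}"
  then have s\<Sigma>: "\<sigma> \<in> \<Sigma>" by blast
  obtain mr where mr: "\<forall>x\<in>\<sigma>. f x = mr \<bullet> x" using fPL s\<Sigma> unfolding PL_def by blast
  have gs: "gens \<sigma> \<subseteq> \<sigma>" using gen_in_cone_gen[OF gens_fin[OF s\<Sigma>]] gens_eq[OF s\<Sigma>] by blast
  have "m \<bullet> x \<le> f x" if x: "x \<in> \<sigma>" for x
  proof -
    have "x \<in> cone_gen (gens \<sigma>)" using x gens_eq[OF s\<Sigma>, symmetric] by simp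
    then obtain c where c: "\<forall>v\<in>gens \<sigma>. 0 \<le> c v" "x = (\<Sum>v\<in>gens \<sigma>. c v *\<^sub>R v)" unfolding cone_gen_def by blast
    have "m \<bullet> x = (\<Sum>v\<in>gens \<sigma>. c v * (m \<bullet> v))" unfolding c(2) by (simp add: inner_sum_right)
    also have "\<dots> \<le> (\<Sum>v\<in>gens \<sigma>. c v * (mr \<bullet> v))"
    proof (rule sum_mono)
      fix v assume v: "v \<in> gens \<sigma>"
      have "m \<bullet> v \<le> f v" using s v by blast
      moreover have "f v = mr \<bullet> v" using mr gs v by blast
      ultimately have "m \<bullet> v \<le> mr \<bullet> v" by simp
      then show "c v * (m \<bullet> v) \<le> c v * (mr \<bullet> v)" using c(1) v by (simp add: mult_left_mono)
    qed
    also have "\<dots> = mr \<bullet> x" unfolding c(2) by (simp add: inner_sum_right)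
    also have "\<dots> = f x" using mr x by simp
    finally show ?thesis .
  qed
  then show "\<sigma> \<in> Sigma_fm \<Sigma> f m" unfolding Sigma_fm_def using s\<Sigma> by blast
qed

lemma main_zero:
  assumes fPL: "f \<in> PL \<Sigma>"
    and big: "\<forall>\<rho>\<in>\<Sigma>. \<exists>mr. (\<forall>x\<in>\<rho>. f x = mr \<bullet> x) \<and> norm mr < norm m"
  shows "(\<Sum>\<sigma>\<in>Sigma_fm \<Sigma> f m. (-1::int) ^ dim \<sigma>) = 0"
proof -
  define w where "w = - m"
  define T where "T = {v. m \<bullet> v \<le> f v}"
  define S where "S = Sigma_fm \<Sigma> f m"
  define h where "h \<tau> = (-1::int) ^ dim \<tau>" for \<tau> :: "(real^'n) set"
  have SS: "S \<subseteq> \<Sigma>" unfolding S_def Sigma_fm_def by blast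
  have fS: "finite S" using finite_subset[OF SS fin] .
  have uniq_sum: "(\<Sum>\<rho>\<in>\<Sigma>. if Cr w \<tau> \<rho> then h \<tau> else 0) = h \<tau>" if t: "\<tau> \<in> \<Sigma>" for \<tau>
  proof -
    obtain \<rho>0 where r0: "\<rho>0 \<in> \<Sigma>" "Cr w \<tau> \<rho>0" using C_exists[OF t] by blast
    have "(\<Sum>\<rho>\<in>\<Sigma>. if Cr w \<tau> \<rho> then h \<tau> else 0) = (\<Sum>\<rho>\<in>\<Sigma>. if \<rho> = \<rho>0 then h \<tau> else 0)"
    proof (rule sum.cong[OF refl])
      fix \<rho> assume r: "\<rho> \<in> \<Sigma>"
      have "Cr w \<tau> \<rho> \<longleftrightarrow> \<rho> = \<rho>0" using C_unique[OF r r0(1), of w \<tau>] r0(2) by blast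
      then show "(if Cr w \<tau> \<rho> then h \<tau> else 0) = (if \<rho> = \<rho>0 then h \<tau> else 0)" by simp
    qed
    also have "\<dots> = h \<tau>" using fin r0(1) by (simp add: sum.delta')
    finally show ?thesis .
  qed
  have "(\<Sum>\<tau>\<in>S. h \<tau>) = (\<Sum>\<tau>\<in>S. \<Sum>\<rho>\<in>\<Sigma>. if Cr w \<tau> \<rho> then h \<tau> else 0)"
    by (rule sum.cong[OF refl]) (use uniq_sum SS in auto)
  also have "\<dots> = (\<Sum>\<rho>\<in>\<Sigma>. \<Sum>\<tau>\<in>S. if Cr w \<tau> \<rho> then h \<tau> else 0)" by (rule sum.swap)
  also have "\<dots> = (\<Sum>\<rho>\<in>\<Sigma>. \<Sum>\<tau>\<in>{\<tau>\<in>S. Cr w \<tau> \<rho>}. h \<tau>)"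
    by (rule sum.cong[OF refl]) (simp add: sum.inter_filter[OF fS])
  also have "\<dots> = 0"
  proof (rule sum.neutral, rule ballI)
    fix \<rho> assume r: "\<rho> \<in> \<Sigma>"
    let ?P = "gens \<rho>"
    define R where "R = {v\<in>?P. coord ?P w v \<le> 0}"
    show "(\<Sum>\<tau>\<in>{\<tau>\<in>S. Cr w \<tau> \<rho>}. h \<tau>) = 0"
    proof (cases "w \<in> span ?P")
      case False
      then have "{\<tau>\<in>S. Cr w \<tau> \<rho>} = {}" unfolding Cr_def by blast
      then show ?thesis by (metis sum.empty)
    next
      case True
      have setEq: "{\<tau>\<in>S. Cr w \<tau> \<rho>} = cone_gen ` {G. R \<subseteq> G \<and> G \<subseteq> ?P \<inter> T}"
      proof
        show "{\<tau>\<in>S. Cr w \<tau> \<rho>} \<subseteq> cone_gen ` {G. R \<subseteq> G \<and> G \<subseteq> ?P \<inter> T}"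
        proof
          fix \<tau> assume "\<tau> \<in> {\<tau>\<in>S. Cr w \<tau> \<rho>}"
          then have t: "\<tau> \<in> \<Sigma>" "gens \<tau> \<subseteq> T" "Cr w \<tau> \<rho>"
            using Sfm_iff[OF fPL] unfolding S_def T_def by auto
          then have "gens \<tau> \<in> {G. R \<subseteq> G \<and> G \<subseteq> ?P \<inter> T}" unfolding Cr_def R_def by blast
          then show "\<tau> \<in> cone_gen ` {G. R \<subseteq> G \<and> G \<subseteq> ?P \<inter> T}" using gens_eq[OF t(1)] by blast
        qed
        show "cone_gen ` {G. R \<subseteq> G \<and> G \<subseteq> ?P \<inter> T} \<subseteq> {\<tau>\<in>S. Cr w \<tau> \<rho>}"
        proof
          fix \<tau> assume "\<tau> \<in> cone_gen ` {G. R \<subseteq> G \<and> G \<subseteq> ?P \<inter> T}"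
          then obtain G where G: "R \<subseteq> G" "G \<subseteq> ?P \<inter> T" "\<tau> = cone_gen G" by blast
          have GP: "G \<subseteq> ?P" using G by blast
          have t: "\<tau> \<in> \<Sigma>" "gens \<tau> = G" using sub_cone[OF r GP] G(3) by auto
          have "\<tau> \<in> S" unfolding S_def using Sfm_iff[OF fPL] t G(2) unfolding T_def by auto
          moreover have "Cr w \<tau> \<rho>" unfolding Cr_def using t(2) G True unfolding R_def by blast
          ultimately show "\<tau> \<in> {\<tau>\<in>S. Cr w \<tau> \<rho>}" by blast
        qed
      qed
      have inj: "inj_on cone_gen {G. R \<subseteq> G \<and> G \<subseteq> ?P \<inter> T}"
      proof (rule inj_onI)
        fix G1 G2 assume G12: "G1 \<in> {G. R \<subseteq> G \<and> G \<subseteq> ?P \<inter> T}" "G2 \<in> {G. R \<subseteq> G \<and> G \<subseteq> ?P \<inter> T}"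
          "cone_gen G1 = cone_gen G2"
        have "G1 \<subseteq> ?P" "G2 \<subseteq> ?P" using G12(1,2) by blast+
        then have "gens (cone_gen G1) = G1" "gens (cone_gen G2) = G2" using sub_cone(2)[OF r] by blast+
        then show "G1 = G2" using G12(3) by metis
      qed
      have "(\<Sum>\<tau>\<in>{\<tau>\<in>S. Cr w \<tau> \<rho>}. h \<tau>) = (\<Sum>G\<in>{G. R \<subseteq> G \<and> G \<subseteq> ?P \<inter> T}. h (cone_gen G))"
        unfolding setEq by (rule sum.reindex[OF inj, unfolded comp_def])
      also have "\<dots> = (\<Sum>G\<in>{G. R \<subseteq> G \<and> G \<subseteq> ?P \<inter> T}. (-1::int) ^ card G)"
      proof (rule sum.cong[OF refl])
        fix G assume "G \<in> {G. R \<subseteq> G \<and> G \<subseteq> ?P \<inter> T}"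
        then have GP: "G \<subseteq> ?P" by blast
        show "h (cone_gen G) = (-1) ^ card G" unfolding h_def
          using dim_gens[OF sub_cone(1)[OF r GP]] sub_cone(2)[OF r GP] by simp
      qed
      also have "\<dots> = 0"
      proof (rule bool_sum_zero)
        show "finite (?P \<inter> T)" using gens_fin[OF r] by simp
        show "R \<noteq> ?P \<inter> T"
        proof
          assume RT: "R = ?P \<inter> T"
          obtain mr where mr: "\<forall>x\<in>\<rho>. f x = mr \<bullet> x" "norm mr < norm m" using big r by blast
          have gs: "?P \<subseteq> \<rho>" using gen_in_cone_gen[OF gens_fin[OF r]] gens_eq[OF r] by blast
          have wsum: "w = (\<Sum>v\<in>?P. coord ?P w v *\<^sub>R v)" using coord_sum[OF gens_fin[OF r] True] .
          have "(mr - m) \<bullet> w = (\<Sum>v\<in>?P. coord ?P w v * ((mr - m) \<bullet> v))"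
            by (subst wsum) (simp add: inner_sum_right)
          also have "\<dots> \<le> 0"
          proof (rule sum_nonpos)
            fix v assume v: "v \<in> ?P"
            have "f v = mr \<bullet> v" using mr(1) gs v by blast
            then have fv: "(mr - m) \<bullet> v = f v - m \<bullet> v" by (simp add: inner_diff_left)
            show "coord ?P w v * ((mr - m) \<bullet> v) \<le> 0"
            proof (cases "v \<in> T")
              case True
              then have "coord ?P w v \<le> 0" using RT v unfolding R_def by blast
              moreover have "0 \<le> (mr - m) \<bullet> v" using True fv unfolding T_def by simp
              ultimately show ?thesis by (simp add: mult_nonpos_nonneg)
            next
              case False
              then have "\<not> coord ?P w v \<le> 0" using RT v unfolding R_def by blast
              then have "0 < coord ?P w v" by simp
              moreover have "(mr - m) \<bullet> v < 0" using False fv unfolding T_def by simp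
              ultimately have "coord ?P w v * ((mr - m) \<bullet> v) < 0" by (rule mult_pos_neg)
              then show ?thesis by simp
            qed
          qed
          finally have "(mr - m) \<bullet> w \<le> 0" .
          then have "m \<bullet> m \<le> mr \<bullet> m" unfolding w_def by (simp add: inner_diff_left)
          also have "\<dots> \<le> norm mr * norm m" by (rule norm_cauchy_schwarz)
          finally have le: "norm m * norm m \<le> norm mr * norm m" by (simp add: dot_square_norm power2_eq_square)
          have "0 < norm m" using mr(2) norm_ge_zero[of mr] by linarith
          then have "norm m \<le> norm mr" using le by simp
          then show False using mr(2) by simp
        qed
      qed
      finally show ?thesis .
    qed
  qed
  finally show ?thesis unfolding S_def h_def .
qed

end

theorem lemma4:
  fixes \<Sigma> :: "(real^'n) set set" and f :: "real^'n \<Rightarrow> real"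
  assumes "complete_fan \<Sigma>" and "unimodular_fan \<Sigma>" and "f \<in> PL \<Sigma>"
  shows "finite {m. lattice_pt m \<and> (\<Sum>\<sigma>\<in>Sigma_fm \<Sigma> f m. (-1::int) ^ dim \<sigma>) \<noteq> 0}"
proof -
  interpret fanctx \<Sigma> using assms(1,2) by unfold_locales
  define mr where "mr \<rho> = (SOME m. lattice_pt m \<and> (\<forall>x\<in>\<rho>. f x = m \<bullet> x))" for \<rho> :: "(real^'n) set"
  have mr: "\<forall>x\<in>\<rho>. f x = mr \<rho> \<bullet> x" if "\<rho> \<in> \<Sigma>" for \<rho>
  proof -
    have "\<exists>m. lattice_pt m \<and> (\<forall>x\<in>\<rho>. f x = m \<bullet> x)" using assms(3) that unfolding PL_def by blast
    from someI_ex[OF this] show ?thesis unfolding mr_def by blast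
  qed
  define K where "K = (\<Sum>\<rho>\<in>\<Sigma>. norm (mr \<rho>))"
  have "{m. lattice_pt m \<and> (\<Sum>\<sigma>\<in>Sigma_fm \<Sigma> f m. (-1::int) ^ dim \<sigma>) \<noteq> 0}
          \<subseteq> {m. lattice_pt m \<and> norm m \<le> K}"
  proof
    fix m assume m: "m \<in> {m. lattice_pt m \<and> (\<Sum>\<sigma>\<in>Sigma_fm \<Sigma> f m. (-1::int) ^ dim \<sigma>) \<noteq> 0}"
    show "m \<in> {m. lattice_pt m \<and> norm m \<le> K}"
    proof (rule ccontr)
      assume "m \<notin> {m. lattice_pt m \<and> norm m \<le> K}"
      then have mK: "K < norm m" using m by auto
      have "\<forall>\<rho>\<in>\<Sigma>. \<exists>mr. (\<forall>x\<in>\<rho>. f x = mr \<bullet> x) \<and> norm mr < norm m"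
      proof
        fix \<rho> assume r: "\<rho> \<in> \<Sigma>"
        have "norm (mr \<rho>) \<le> K" unfolding K_def by (rule member_le_sum) (use r fin in auto)
        then show "\<exists>mr. (\<forall>x\<in>\<rho>. f x = mr \<bullet> x) \<and> norm mr < norm m" using mr[OF r] mK by force
      qed
      then have "(\<Sum>\<sigma>\<in>Sigma_fm \<Sigma> f m. (-1::int) ^ dim \<sigma>) = 0" by (rule main_zero[OF assms(3)])
      then show False using m by simp
    qed
  qed
  then show ?thesis using finite_subset finite_lattice_ball by blast
qed

end
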